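(* Let $E$ be a regular biordered set satisfying (E1), (E2), (E3) below, and let $e_1,\dots,e_n\in E$ satisfy $M(e_i,e_j)=\{0\}$ for all $i\ne j$. Then the element $e_1\oplus e_2\oplus\cdots\oplus e_n$ is well defined (inductively, $((e_1\oplus e_2)\oplus e_3)\oplus\cdots$, each step being defined), the elements $\mathcal L(e_1),\dots,\mathcal L(e_n)$ are independent in the lattice $L(E)=E/\mathcal L$, and $\mathcal L(e_1)\vee\cdots\vee\mathcal L(e_n)=\mathcal L(e_1\oplus\cdots\oplus e_n)$. Conditions: (E1) there exists $0\in E$ with $0\,\omega\,x$ for every $x\in E$; (E2) there is a map $x\mapsto x'$ on $E$ such that for all $x,y\in E$: $(x')'=x$; $y\,\omega^l\,x$ iff $x'\,\omega^r\,y'$; $y\,\omega^l\,x'$ iff $M(y,x)=\{0\}$; (E3) for all $x,y\in E$, if $y\,\omega\,x'$ then $S(x',y')\cap S(y',x')\ne\emptyset$.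
   Context: A regular biordered set is a partial algebra isomorphic to the set of idempotents $E(S)$ of a regular semigroup $S$ (regular: every $x$ has $y$ with $xyx=x$), where $ef$ (computed in $S$) is defined when $\{ef,fe\}\cap\{e,f\}\ne\emptyset$. In $E$: $\omega^l=\{(e,f): ef=e\}$, $\omega^r=\{(e,f): fe=e\}$, $\omega=\omega^l\cap\omega^r$; $M(e,f)=\{g\in E: g\,\omega^l\,e,\ g\,\omega^r\,f\}$; for $g,h\in M(e,f)$, $g\preceq h$ iff $eg\,\omega^r\,eh$ and $gf\,\omega^l\,hf$; $S(e,f)=\{h\in M(e,f): g\preceq h\text{ for all }g\in M(e,f)\}$. Under (E1)–(E3), for $f\,\omega\,e'$ the set $S(e',f')\cap S(f',e')$ has exactly one element $k$, and $e\oplus f:=k'$ (defined only when $f\,\omega\,e'$). $\mathcal L=\omega^l\cap(\omega^l)^{-1}$ with classes $\mathcal L(e)$; $E/\mathcal L$ is ordered by $\mathcal L(e)\le\mathcal L(f)$ iff $e\,\omega^l\,f$ (a lattice with least element $\mathcal L(0)$). Elements $a_1,\dots,a_n$ of a lattice with least element $0$ are independent if $a_i\wedge\bigvee_{j\ne i}a_j=0$ for each $i$. *)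

theory Defs
  imports Main
begin

text \<open>A regular biordered set is (up to isomorphism) the set of idempotents of a
regular semigroup S; we model S as a type of class semigroup_mult (with a
regularity assumption) and E as its set of idempotents.\<close>

definition regular_sg :: "'a::semigroup_mult itself \<Rightarrow> bool" where
  "regular_sg _ \<longleftrightarrow> (\<forall>x::'a. \<exists>y. x * y * x = x)"

definition Idem :: "'a::semigroup_mult set" where
  "Idem = {x. x * x = x}"

definition omega_l :: "'a::semigroup_mult \<Rightarrow> 'a \<Rightarrow> bool" where
  "omega_l e f \<longleftrightarrow> e * f = e"

definition omega_r :: "'a::semigroup_mult \<Rightarrow> 'a \<Rightarrow> bool" where
  "omega_r e f \<longleftrightarrow> f * e = e"

definition omega :: "'a::semigroup_mult \<Rightarrow> 'a \<Rightarrow> bool" where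
  "omega e f \<longleftrightarrow> omega_l e f \<and> omega_r e f"

definition Lrel :: "'a::semigroup_mult \<Rightarrow> 'a \<Rightarrow> bool" where
  "Lrel e f \<longleftrightarrow> omega_l e f \<and> omega_l f e"

definition Mset :: "'a::semigroup_mult \<Rightarrow> 'a \<Rightarrow> 'a set" where
  "Mset e f = {g \<in> Idem. omega_l g e \<and> omega_r g f}"

definition sandwich_le :: "'a::semigroup_mult \<Rightarrow> 'a \<Rightarrow> 'a \<Rightarrow> 'a \<Rightarrow> bool" where
  "sandwich_le e f g h \<longleftrightarrow> omega_r (e * g) (e * h) \<and> omega_l (g * f) (h * f)"

definition Sset :: "'a::semigroup_mult \<Rightarrow> 'a \<Rightarrow> 'a set" where
  "Sset e f = {h \<in> Mset e f. \<forall>g \<in> Mset e f. sandwich_le e f g h}"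

definition E1 :: "'a::semigroup_mult \<Rightarrow> bool" where
  "E1 z \<longleftrightarrow> z \<in> Idem \<and> (\<forall>x \<in> Idem. omega z x)"

definition E2 :: "'a::semigroup_mult \<Rightarrow> ('a \<Rightarrow> 'a) \<Rightarrow> bool" where
  "E2 z c \<longleftrightarrow> (\<forall>x \<in> Idem. c x \<in> Idem \<and> c (c x) = x) \<and>
     (\<forall>x \<in> Idem. \<forall>y \<in> Idem. (omega_l y x \<longleftrightarrow> omega_r (c x) (c y))) \<and>
     (\<forall>x \<in> Idem. \<forall>y \<in> Idem. (omega_l y (c x) \<longleftrightarrow> Mset y x = {z}))"

definition E3 :: "('a::semigroup_mult \<Rightarrow> 'a) \<Rightarrow> bool" where
  "E3 c \<longleftrightarrow> (\<forall>x \<in> Idem. \<forall>y \<in> Idem.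
      omega y (c x) \<longrightarrow> Sset (c x) (c y) \<inter> Sset (c y) (c x) \<noteq> {})"

text \<open>e \<oplus> f := k' where k is the unique element of S(e',f') \<inter> S(f',e');
  meaningful only when f \<omega> e'.\<close>
definition oplus :: "('a::semigroup_mult \<Rightarrow> 'a) \<Rightarrow> 'a \<Rightarrow> 'a \<Rightarrow> 'a" where
  "oplus c e f = c (THE k. k \<in> Sset (c e) (c f) \<inter> Sset (c f) (c e))"

definition oplus_defined :: "('a::semigroup_mult \<Rightarrow> 'a) \<Rightarrow> 'a \<Rightarrow> 'a \<Rightarrow> bool" where
  "oplus_defined c e f \<longleftrightarrow> omega f (c e)"

text \<open>osum c e k = ((e 1 \<oplus> e 2) \<oplus> ...) \<oplus> e k, for k \<ge> 1 (indices start at 1).\<close>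
fun osum :: "('a::semigroup_mult \<Rightarrow> 'a) \<Rightarrow> (nat \<Rightarrow> 'a) \<Rightarrow> nat \<Rightarrow> 'a" where
  "osum c e 0 = undefined"
| "osum c e (Suc 0) = e 1"
| "osum c e (Suc (Suc k)) = oplus c (osum c e (Suc k)) (e (Suc (Suc k)))"

text \<open>Joins/meets in the poset E/L (ordered by \<omega>^l), expressed on representatives.\<close>
definition is_join :: "'a::semigroup_mult set \<Rightarrow> 'a \<Rightarrow> bool" where
  "is_join A j \<longleftrightarrow> j \<in> Idem \<and> (\<forall>a \<in> A. omega_l a j) \<and>
     (\<forall>u \<in> Idem. (\<forall>a \<in> A. omega_l a u) \<longrightarrow> omega_l j u)"

definition is_meet :: "'a::semigroup_mult set \<Rightarrow> 'a \<Rightarrow> bool" where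
  "is_meet A m \<longleftrightarrow> m \<in> Idem \<and> (\<forall>a \<in> A. omega_l m a) \<and>
     (\<forall>u \<in> Idem. (\<forall>a \<in> A. omega_l u a) \<longrightarrow> omega_l u m)"

end

theory Submission
  imports Defs
begin

lemma E2_Idem: "E2 z c \<Longrightarrow> x \<in> Idem \<Longrightarrow> c x \<in> Idem"
  unfolding E2_def by blast
lemma E2_cc: "E2 z c \<Longrightarrow> x \<in> Idem \<Longrightarrow> c (c x) = x"
  unfolding E2_def by blast
lemma E2_lr: "E2 z c \<Longrightarrow> x \<in> Idem \<Longrightarrow> y \<in> Idem \<Longrightarrow> omega_l y x \<longleftrightarrow> omega_r (c x) (c y)"
  unfolding E2_def by blast
lemma E2_rl: "E2 z c \<Longrightarrow> x \<in> Idem \<Longrightarrow> y \<in> Idem \<Longrightarrow> omega_r y x \<longleftrightarrow> omega_l (c x) (c y)"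
  using E2_lr[of z c "c y" "c x"] E2_Idem[of z c] E2_cc[of z c] by auto
lemma E2_M: "E2 z c \<Longrightarrow> x \<in> Idem \<Longrightarrow> y \<in> Idem \<Longrightarrow> omega_l y (c x) \<longleftrightarrow> Mset y x = {z}"
  unfolding E2_def by blast

lemma sand_core1:
  assumes k1: "k \<in> Sset a b" and k2: "k \<in> Sset b a" and a: "a \<in> Idem"
    and v: "v \<in> Idem" and av: "a * v = v" and bv: "b * v = v"
  shows "k * v = v"
proof -
  have va: "v * a \<in> Mset a b"
    using a v av bv unfolding Mset_def Idem_def omega_l_def omega_r_def
    by (simp add: mult.assoc) (metis mult.assoc)
  have "sandwich_le a b (v * a) k" using k1 va unfolding Sset_def by blast
  then have "(a * k) * (a * (v * a)) = a * (v * a)" unfolding sandwich_le_def omega_r_def by simp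
  moreover have "a * k = k" using k2 unfolding Sset_def Mset_def omega_r_def by blast
  moreover have "a * (v * a) = v * a" using av by (simp add: mult.assoc[symmetric])
  ultimately have kva: "k * (v * a) = v * a" by simp
  have "k * v = k * (v * (a * v))" using v av unfolding Idem_def by simp
  also have "\<dots> = (k * (v * a)) * v" by (simp add: mult.assoc)
  also have "\<dots> = v * (a * v)" using kva by (simp add: mult.assoc)
  also have "\<dots> = v" using v av unfolding Idem_def by simp
  finally show ?thesis .
qed

lemma sand_core2:
  assumes k1: "k \<in> Sset a b" and k2: "k \<in> Sset b a" and a: "a \<in> Idem"
    and v: "v \<in> Idem" and va: "v * a = v" and vb: "v * b = v"
  shows "v * k = v"
proof -
  have av: "a * v \<in> Mset b a"
    using a v va vb unfolding Mset_def Idem_def omega_l_def omega_r_def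
    by (simp add: mult.assoc) (metis mult.assoc)
  have "sandwich_le b a (a * v) k" using k2 av unfolding Sset_def by blast
  then have "((a * v) * a) * (k * a) = (a * v) * a" unfolding sandwich_le_def omega_l_def by simp
  moreover have "k * a = k" using k1 unfolding Sset_def Mset_def omega_l_def by blast
  moreover have "(a * v) * a = a * v" using va by (simp add: mult.assoc)
  ultimately have avk: "(a * v) * k = a * v" by simp
  have "v * k = (v * (a * v)) * k" using v va unfolding Idem_def by (simp add: mult.assoc[symmetric])
  also have "\<dots> = v * ((a * v) * k)" by (simp add: mult.assoc)
  also have "\<dots> = v * (a * v)" using avk by simp
  also have "\<dots> = v" using v va unfolding Idem_def by (simp add: mult.assoc[symmetric])
  finally show ?thesis .
qed

definition UB :: "'a::semigroup_mult \<Rightarrow> 'a \<Rightarrow> 'a \<Rightarrow> bool" where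
  "UB e f g \<longleftrightarrow> g \<in> Idem \<and> omega e g \<and> omega f g \<and>
     (\<forall>u\<in>Idem. omega_l e u \<and> omega_l f u \<longrightarrow> omega_l g u) \<and>
     (\<forall>u\<in>Idem. omega_r e u \<and> omega_r f u \<longrightarrow> omega_r g u)"

lemma kprops:
  assumes e2: "E2 z c" and eI: "e \<in> Idem" and fI: "f \<in> Idem"
    and k1: "k \<in> Sset (c e) (c f)" and k2: "k \<in> Sset (c f) (c e)"
  shows "UB e f (c k)"
proof -
  have kI: "k \<in> Idem" and kce: "omega_l k (c e)" "omega_r k (c e)"
    and kcf: "omega_l k (c f)" "omega_r k (c f)"
    using k1 k2 unfolding Sset_def Mset_def by auto
  have ceI: "c e \<in> Idem" and cfI: "c f \<in> Idem" and ckI: "c k \<in> Idem"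
    using e2 eI fI kI E2_Idem by blast+
  have cck: "c (c k) = k" using e2 kI E2_cc by blast
  have oe: "omega e (c k)" unfolding omega_def
    using E2_lr[OF e2 ckI eI] E2_rl[OF e2 ckI eI] cck kce by simp
  have of: "omega f (c k)" unfolding omega_def
    using E2_lr[OF e2 ckI fI] E2_rl[OF e2 ckI fI] cck kcf by simp
  have l: "omega_l (c k) u" if u: "u \<in> Idem" "omega_l e u" "omega_l f u" for u
  proof -
    have cuI: "c u \<in> Idem" using e2 u E2_Idem by blast
    have "c e * c u = c u" using E2_lr[OF e2 u(1) eI] u unfolding omega_r_def by simp
    moreover have "c f * c u = c u" using E2_lr[OF e2 u(1) fI] u unfolding omega_r_def by simp
    ultimately have "k * c u = c u" using sand_core1[OF k1 k2 ceI cuI] by simp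
    then show ?thesis using E2_lr[OF e2 u(1) ckI] cck unfolding omega_r_def by simp
  qed
  have r: "omega_r (c k) u" if u: "u \<in> Idem" "omega_r e u" "omega_r f u" for u
  proof -
    have cuI: "c u \<in> Idem" using e2 u E2_Idem by blast
    have "c u * c e = c u" using E2_rl[OF e2 u(1) eI] u unfolding omega_l_def by simp
    moreover have "c u * c f = c u" using E2_rl[OF e2 u(1) fI] u unfolding omega_l_def by simp
    ultimately have "c u * k = c u" using sand_core2[OF k1 k2 ceI cuI] by simp
    then show ?thesis using E2_rl[OF e2 u(1) ckI] cck unfolding omega_l_def by simp
  qed
  show ?thesis unfolding UB_def using ckI oe of l r by blast
qed

lemma UB_unique:
  assumes "UB e f g" "UB e f h" shows "g = h"
proof -
  have "g * h = g" "h * g = h" "h * g = g" "g * h = h"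
    using assms unfolding UB_def omega_def omega_l_def omega_r_def by blast+
  then show ?thesis by simp
qed

lemma oplus_UB:
  assumes e2: "E2 z c" and e3: "E3 c" and eI: "e \<in> Idem" and fI: "f \<in> Idem"
    and d: "omega f (c e)"
  shows "UB e f (oplus c e f)"
proof -
  let ?S = "Sset (c e) (c f) \<inter> Sset (c f) (c e)"
  have ne: "?S \<noteq> {}" using e3 eI fI d unfolding E3_def by blast
  have un: "k1 = k2" if "k1 \<in> ?S" "k2 \<in> ?S" for k1 k2
  proof -
    have "k1 \<in> Idem" "k2 \<in> Idem" using that unfolding Sset_def Mset_def by auto
    moreover have "c k1 = c k2" using UB_unique kprops[OF e2 eI fI] that by blast
    ultimately show ?thesis using E2_cc[OF e2] by metis
  qed
  have "\<exists>!k. k \<in> ?S" using ne un by blast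
  then have "(THE k. k \<in> ?S) \<in> ?S" by (rule theI')
  then show ?thesis unfolding oplus_def using kprops[OF e2 eI fI] by blast
qed

definition Q :: "(nat \<Rightarrow> 'a::semigroup_mult) \<Rightarrow> nat \<Rightarrow> 'a \<Rightarrow> bool" where
  "Q e k g \<longleftrightarrow> g \<in> Idem \<and> (\<forall>l\<in>{1..k}. omega (e l) g) \<and>
     (\<forall>u\<in>Idem. (\<forall>l\<in>{1..k}. omega_l (e l) u) \<longrightarrow> omega_l g u) \<and>
     (\<forall>u\<in>Idem. (\<forall>l\<in>{1..k}. omega_r (e l) u) \<longrightarrow> omega_r g u)"

lemma step_def:
  assumes e2: "E2 z c" and q: "Q e k g" and eI: "e (Suc k) \<in> Idem"
    and el: "\<forall>l\<in>{1..k}. e l \<in> Idem"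
    and o1: "\<forall>l\<in>{1..k}. omega_l (e l) (c (e (Suc k)))"
    and o2: "\<forall>l\<in>{1..k}. omega_l (e (Suc k)) (c (e l))"
  shows "omega (e (Suc k)) (c g)"
proof -
  have gI: "g \<in> Idem" using q unfolding Q_def by blast
  have cgI: "c g \<in> Idem" using E2_Idem[OF e2 gI] .
  have ceI: "c (e (Suc k)) \<in> Idem" using E2_Idem[OF e2 eI] .
  have "omega_l g (c (e (Suc k)))" using q o1 ceI unfolding Q_def by blast
  then have r: "omega_r (e (Suc k)) (c g)"
    using E2_rl[OF e2 cgI eI] E2_cc[OF e2 gI] by simp
  have "omega_r (e l) (c (e (Suc k)))" if "l \<in> {1..k}" for l
    using E2_rl[OF e2 ceI] el that o2 E2_cc[OF e2 eI] by simp
  then have "omega_r g (c (e (Suc k)))" using q ceI unfolding Q_def by blast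
  then have l: "omega_l (e (Suc k)) (c g)"
    using E2_lr[OF e2 cgI eI] E2_cc[OF e2 gI] by simp
  show ?thesis using l r unfolding omega_def by blast
qed

lemma step_Q:
  assumes "Q e k g" "UB g (e (Suc k)) h"
  shows "Q e (Suc k) h"
proof -
  have tl: "omega_l x y \<Longrightarrow> omega_l y w \<Longrightarrow> omega_l x w" for x y w :: 'a
    unfolding omega_l_def by (metis mult.assoc)
  have tr: "omega_r x y \<Longrightarrow> omega_r y w \<Longrightarrow> omega_r x w" for x y w :: 'a
    unfolding omega_r_def by (metis mult.assoc)
  have t: "omega x y \<Longrightarrow> omega y w \<Longrightarrow> omega x w" for x y w :: 'a
    using tl tr unfolding omega_def by blast
  have a: "\<forall>l\<in>{1..Suc k}. omega (e l) h"
  proof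
    fix l assume "l \<in> {1..Suc k}"
    then consider "l \<in> {1..k}" | "l = Suc k" by fastforce
    then show "omega (e l) h"
    proof cases
      case 1 then show ?thesis using assms t unfolding Q_def UB_def by (metis atLeastAtMost_iff)
    next
      case 2 then show ?thesis using assms unfolding UB_def by auto
    qed
  qed
  have b: "omega_l h u" if "u \<in> Idem" "\<forall>l\<in>{1..Suc k}. omega_l (e l) u" for u
  proof -
    have "\<forall>l\<in>{1..k}. omega_l (e l) u" using that(2) by auto
    then have "omega_l g u" using assms(1) that(1) unfolding Q_def by blast
    moreover have "omega_l (e (Suc k)) u" using that(2) by auto
    ultimately show ?thesis using assms(2) that(1) unfolding UB_def by blast
  qed
  have c: "omega_r h u" if "u \<in> Idem" "\<forall>l\<in>{1..Suc k}. omega_r (e l) u" for u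
  proof -
    have "\<forall>l\<in>{1..k}. omega_r (e l) u" using that(2) by auto
    then have "omega_r g u" using assms(1) that(1) unfolding Q_def by blast
    moreover have "omega_r (e (Suc k)) u" using that(2) by auto
    ultimately show ?thesis using assms(2) that(1) unfolding UB_def by blast
  qed
  show ?thesis unfolding Q_def using a b c assms(2) unfolding UB_def by blast
qed

lemma Q_cong: "Q e k g \<Longrightarrow> (\<forall>l\<in>{1..k}. e l = e' l) \<Longrightarrow> Q e' k g"
  unfolding Q_def by auto

theorem proposition5p5:
  fixes z :: "'a::semigroup_mult" and c :: "'a \<Rightarrow> 'a"
    and e :: "nat \<Rightarrow> 'a" and n :: nat
  assumes reg: "regular_sg TYPE('a)"
    and e1: "E1 z" and e2: "E2 z c" and e3: "E3 c"
    and n1: "n \<ge> 1"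
    and eE: "\<forall>i \<in> {1..n}. e i \<in> Idem"
    and orth: "\<forall>i \<in> {1..n}. \<forall>j \<in> {1..n}. i \<noteq> j \<longrightarrow> Mset (e i) (e j) = {z}"
  shows "(\<forall>k. 1 \<le> k \<and> k < n \<longrightarrow> oplus_defined c (osum c e k) (e (Suc k)))
    \<and> (\<forall>i \<in> {1..n}. \<forall>j m. is_join (e ` ({1..n} - {i})) j \<longrightarrow>
           is_meet {e i, j} m \<longrightarrow> Lrel m z)
    \<and> is_join (e ` {1..n}) (osum c e n)"
proof -
  have orthl: "omega_l (e i) (c (e j))" if "i \<in> {1..n}" "j \<in> {1..n}" "i \<noteq> j" for i j
    using E2_M[OF e2] eE orth that by blast
  have stepd: "omega (e (Suc k)) (c g)" if "Q e k g" "Suc k \<le> n" for k g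
  proof (rule step_def[OF e2 that(1)])
    show "e (Suc k) \<in> Idem" using eE that(2) by simp
    show "\<forall>l\<in>{1..k}. e l \<in> Idem" using eE that(2) by simp
    show "\<forall>l\<in>{1..k}. omega_l (e l) (c (e (Suc k)))" using orthl that(2) by simp
    show "\<forall>l\<in>{1..k}. omega_l (e (Suc k)) (c (e l))" using orthl that(2) by simp
  qed
  have allQ: "1 \<le> k \<longrightarrow> k \<le> n \<longrightarrow> Q e k (osum c e k)" for k
  proof (induction k)
    case 0 then show ?case by simp
  next
    case (Suc k)
    show ?case
    proof (cases k)
      case 0
      have "e 1 \<in> Idem" using eE n1 by simp
      then show ?thesis using 0 unfolding Q_def omega_def omega_l_def omega_r_def Idem_def
        by auto
    next
      case (Suc k')
      show ?thesis
      proof (intro impI)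
        assume le: "Suc k \<le> n"
        have q: "Q e k (osum c e k)" using Suc.IH le \<open>k = Suc k'\<close> by simp
        have gI: "osum c e k \<in> Idem" using q unfolding Q_def by blast
        have d: "omega (e (Suc k)) (c (osum c e k))" using stepd q le by blast
        have ub: "UB (osum c e k) (e (Suc k)) (oplus c (osum c e k) (e (Suc k)))"
          using oplus_UB[OF e2 e3 gI _ d] eE le by simp
        have "osum c e (Suc k) = oplus c (osum c e k) (e (Suc k))" using \<open>k = Suc k'\<close> by simp
        then show "Q e (Suc k) (osum c e (Suc k))" using step_Q[OF q ub] by simp
      qed
    qed
  qed
  have p1: "\<forall>k. 1 \<le> k \<and> k < n \<longrightarrow> oplus_defined c (osum c e k) (e (Suc k))"
    unfolding oplus_defined_def using allQ stepd by simp
  have p3: "is_join (e ` {1..n}) (osum c e n)"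
    using allQ[of n] n1 unfolding Q_def is_join_def omega_def by auto
  have p2: "Lrel m z" if i: "i \<in> {1..n}" and j: "is_join (e ` ({1..n} - {i})) J"
    and m: "is_meet {e i, J} m" for i J m
  proof -
    have eiI: "e i \<in> Idem" using eE i by blast
    have ceI: "c (e i) \<in> Idem" using E2_Idem[OF e2 eiI] .
    have "omega_l a (c (e i))" if aA: "a \<in> e ` ({1..n} - {i})" for a
    proof -
      obtain l where l: "l \<in> {1..n}" "l \<noteq> i" "a = e l" using aA by blast
      show ?thesis using orthl[OF l(1) i l(2)] l(3) by simp
    qed
    then have Jl: "omega_l J (c (e i))" using j ceI unfolding is_join_def by blast
    have mI: "m \<in> Idem" and mei: "m * e i = m" and mJ: "m * J = m"
      using m unfolding is_meet_def omega_l_def by auto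
    have "m * c (e i) = m" using mJ Jl unfolding omega_l_def by (metis mult.assoc)
    then have M0: "Mset m (e i) = {z}" using E2_M[OF e2 eiI mI] unfolding omega_l_def by simp
    have "e i * m \<in> Mset m (e i)"
      using mI eiI mei unfolding Mset_def Idem_def omega_l_def omega_r_def
      by (simp add: mult.assoc) (metis mult.assoc)
    then have eim: "e i * m = z" using M0 by blast
    have "m = m * e i * m" using mI mei unfolding Idem_def by simp
    also have "\<dots> = m * z" using eim by (simp add: mult.assoc)
    also have "\<dots> = z" using e1 mI unfolding E1_def omega_def omega_r_def by blast
    finally have mz: "m = z" .
    have "z \<in> Idem" using e1 unfolding E1_def by blast
    then show ?thesis using mz unfolding Lrel_def omega_l_def Idem_def by simp
  qed
  show ?thesis using p1 p2 p3 by blast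
qed

end
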